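(* Let $p$ be a prime, $t\in\mathbb{N}$, $b_1,\ldots,b_t\in\mathbb{F}_p[X]$ monic, nonconstant, pairwise coprime. For $C>0$ let $$E_C=\{L\in\mathcal H\text{ irrational}:\ p^{\deg(A_h(b_1^{l_1}\cdots b_t^{l_t}L))}<C(\bar l_1\cdots\bar l_t h)^4\ \text{for all }l_1,\ldots,l_t\in\mathbb{N}_0,\ h\in\mathbb{N}\},$$ where $\bar l=\max(1,l)$. Then $h(\mathcal H\setminus E_C)\le c_p\,\frac{\log C}{C}$ for all sufficiently large $C$, with $c_p$ depending only on $p$ (and $t$); in particular $\lim_{C\to\infty}h(E_C)=1$.
   Context: $\mathcal H=\{L\in\mathbb{F}_p((X^{-1})):\nu(L)<0\}$, where for $L=\sum_{i=w}^\infty a_iX^{-i}$ with $a_w\ne0$, $\nu(L)=-w$; $h$ is the normalized Haar measure on $\mathcal H$. For an irrational $M\in\mathbb{F}_p((X^{-1}))$ with continued fraction expansion $[A_0;A_1,A_2,\ldots]$ ($A_i\in\mathbb{F}_p[X]$, $\deg A_i\ge1$ for $i\ge1$), $A_h(M)$ denotes the $h$-th partial quotient. *)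

theory Defs
  imports "HOL-Probability.Probability" "HOL-Computational_Algebra.Computational_Algebra"
begin

text \<open>Laurent series in X^{-1} over a field are modelled as formal Laurent series
  in the variable T = X^{-1} (type 'a fls).  A polynomial b(X) becomes b(T^{-1}).\<close>

definition poly_to_fls :: "'a::field poly \<Rightarrow> 'a fls" where
  "poly_to_fls b = (\<Sum>i\<le>degree b. fls_const (coeff b i) * fls_X_inv ^ i)"

text \<open>Polynomial (integer) part [M] in F[X]: coefficient of X^i is the coefficient of T^{-i}.\<close>
definition cf_int :: "'a::field fls \<Rightarrow> 'a poly" where
  "cf_int M = fls_prpart M + [:fls_nth M 0:]"

definition is_rational_fls :: "'a::field fls \<Rightarrow> bool" where
  "is_rational_fls M \<longleftrightarrow> (\<exists>P Q. Q \<noteq> 0 \<and> poly_to_fls Q * M = poly_to_fls P)"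

fun cf_rest :: "'a::field fls \<Rightarrow> nat \<Rightarrow> 'a fls" where
  "cf_rest M 0 = M"
| "cf_rest M (Suc h) = inverse (cf_rest M h - poly_to_fls (cf_int (cf_rest M h)))"

definition cf_quot :: "'a::field fls \<Rightarrow> nat \<Rightarrow> 'a poly" where
  "cf_quot M h = cf_int (cf_rest M h)"

text \<open>The set H = {L : nu(L) < 0} is parametrised by coefficient sequences a:
  L = sum_{n>=0} a n X^{-(n+1)}; the normalised Haar measure is the product of uniform
  measures on the coefficients.\<close>
definition seq_to_fls :: "(nat \<Rightarrow> 'a::field) \<Rightarrow> 'a fls" where
  "seq_to_fls a = fps_to_fls (fps_X * Abs_fps a)"

definition haarH :: "(nat \<Rightarrow> 'a::{field,finite}) measure" where
  "haarH = PiM UNIV (\<lambda>_::nat. measure_pmf (pmf_of_set (UNIV::'a set)))"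

definition E_set :: "nat \<Rightarrow> (nat \<Rightarrow> 'a::{field,finite} poly) \<Rightarrow> real \<Rightarrow> (nat \<Rightarrow> 'a) set" where
  "E_set t b C = {a. \<not> is_rational_fls (seq_to_fls a) \<and>
     (\<forall>l::nat \<Rightarrow> nat. \<forall>h::nat. h \<ge> 1 \<longrightarrow>
        real (CARD('a)) ^ degree (cf_quot (poly_to_fls (\<Prod>i<t. b i ^ l i) * seq_to_fls a) h)
          < C * (real (\<Prod>i<t. max 1 (l i)) * real h) ^ 4)}"

end

theory Submission
  imports Defs
begin

unbundle fps_syntax

lemma fls_sum_nth': "(sum f A) $$ n = (\<Sum>i\<in>A. f i $$ n)"
  by (induction A rule: infinite_finite_induct) auto

definition fr :: "'a::field fls \<Rightarrow> nat \<Rightarrow> 'a" where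
  "fr M = (\<lambda>n. M $$ (int n + 1))"

lemma poly_to_fls_nth: "poly_to_fls P $$ n = (if n \<le> 0 then coeff P (nat (-n)) else 0)"
proof -
  have "poly_to_fls P $$ n = (\<Sum>i\<le>degree P. coeff P i * (if n = - int i then 1 else 0))"
    unfolding poly_to_fls_def by (simp add: fls_sum_nth')
  also have "\<dots> = (\<Sum>i\<le>degree P. if i = nat (-n) \<and> n \<le> 0 then coeff P i else 0)"
    by (intro sum.cong) auto
  also have "\<dots> = (if n \<le> 0 then coeff P (nat (-n)) else 0)"
  proof (cases "n \<le> 0 \<and> nat (-n) \<le> degree P")
    case True then show ?thesis by (simp add: sum.delta)
  next
    case False then show ?thesis by (auto simp: coeff_eq_0 sum.delta)
  qed
  finally show ?thesis .
qed

lemma seq_to_fls_nth: "seq_to_fls a $$ n = (if n \<ge> 1 then a (nat n - 1) else 0)"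
  unfolding seq_to_fls_def by auto

lemma frac_eq: "M - poly_to_fls (cf_int M) = seq_to_fls (fr M)"
proof (rule fls_eqI)
  fix n :: int
  show "(M - poly_to_fls (cf_int M)) $$ n = seq_to_fls (fr M) $$ n"
    by (cases "n \<le> 0") (auto simp: poly_to_fls_nth seq_to_fls_nth cf_int_def fr_def coeff_pCons
        split: nat.splits)
qed

definition Gs :: "(nat \<Rightarrow> 'a::field) \<Rightarrow> nat \<Rightarrow> 'a" where
  "Gs a = fr (inverse (seq_to_fls a))"

lemma Gs_ap: "Gs a = fr (inverse (seq_to_fls a))" by (simp add: Gs_def)

lemma seq_to_fls_0 [simp]: "seq_to_fls (\<lambda>_. 0) = 0"
  by (simp add: fls_eq_iff seq_to_fls_nth)

lemma nat_aux [simp]: "nat (int i + 1) - Suc 0 = i" by simp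

lemma cf_rest_Suc: "cf_rest M (Suc h) = inverse (seq_to_fls ((Gs ^^ h) (fr M)))"
proof (induction h)
  case 0 then show ?case by (simp add: frac_eq)
next
  case (Suc h)
  have "cf_rest M (Suc (Suc h)) = inverse (seq_to_fls (fr (cf_rest M (Suc h))))"
    by (simp only: cf_rest.simps(2)[of M "Suc h"] frac_eq)
  also have "\<dots> = inverse (seq_to_fls ((Gs ^^ Suc h) (fr M)))"
  proof -
    have e: "(Gs ^^ Suc h) (fr M) = Gs ((Gs ^^ h) (fr M))" by simp
    show ?thesis unfolding e Gs_ap[of "(Gs ^^ h) (fr M)"] Suc.IH by (rule refl)
  qed
  finally show ?case .
qed

definition Dg :: "(nat \<Rightarrow> 'a::field) \<Rightarrow> nat" where
  "Dg x = degree (cf_int (inverse (seq_to_fls x)))"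

lemma cf_quot_Suc: "degree (cf_quot M (Suc h)) = Dg ((Gs ^^ h) (fr M))"
  by (simp only: cf_quot_def cf_rest_Suc Dg_def)

definition fnz :: "(nat \<Rightarrow> 'a::zero) \<Rightarrow> nat" where
  "fnz a = (LEAST i. a i \<noteq> 0)"

lemma fnz: assumes "a \<noteq> (\<lambda>_. 0)" shows "a (fnz a) \<noteq> 0" "\<And>i. i < fnz a \<Longrightarrow> a i = 0"
proof -
  from assms obtain j where "a j \<noteq> 0" by auto
  then show "a (fnz a) \<noteq> 0" unfolding fnz_def by (rule LeastI)
  show "\<And>i. i < fnz a \<Longrightarrow> a i = 0" unfolding fnz_def using not_less_Least by blast
qed

lemma seq_to_fls_eq0: "seq_to_fls a = 0 \<longleftrightarrow> a = (\<lambda>_. 0)"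
proof
  assume "seq_to_fls a = 0"
  then have "seq_to_fls a $$ (int i + 1) = 0" for i by simp
  then show "a = (\<lambda>_. 0)" by (auto simp: seq_to_fls_nth fun_eq_iff)
qed (auto simp: seq_to_fls_def)

lemma subdeg_seq: assumes "a \<noteq> (\<lambda>_. 0)" shows "fls_subdegree (seq_to_fls a) = int (fnz a) + 1"
  by (rule fls_subdegree_eqI) (use fnz[OF assms] in \<open>auto simp: seq_to_fls_nth\<close>)

lemma Dg_eq: "Dg x = (if x = (\<lambda>_. 0) then 0 else fnz x + 1)"
proof (cases "x = (\<lambda>_. 0)")
  case True then show ?thesis by (simp add: Dg_def cf_int_def)
next
  case False
  let ?M = "inverse (seq_to_fls x)"
  have sd: "fls_subdegree ?M = - (int (fnz x) + 1)"
    using subdeg_seq[OF False] by simp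
  have "degree (fls_prpart ?M) = fnz x + 1" using sd by simp
  then have "degree (cf_int ?M) = fnz x + 1" unfolding cf_int_def
    by (subst degree_add_eq_left) auto
  then show ?thesis using False by (simp add: Dg_def)
qed


lemma fps_inv_Suc: "inverse (f::'a::field fps) $ Suc n =
   - inverse (f$0) * (\<Sum>i=1..Suc n. f$i * inverse f $ (Suc n - i))"
  by (simp add: fps_inverse_def)

lemma inv_dep: "(\<forall>i\<le>m. (f::'a::field fps)$i = g$i) \<Longrightarrow> inverse f $ m = inverse g $ m"
proof (induction m rule: less_induct)
  case (less m)
  show ?case
  proof (cases m)
    case 0 then show ?thesis using less.prems by simp
  next
    case (Suc n)
    have "(\<Sum>i=1..Suc n. f$i * inverse f $ (Suc n - i)) = (\<Sum>i=1..Suc n. g$i * inverse g $ (Suc n - i))"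
      using less.prems less.IH Suc by (intro sum.cong refl) auto
    then show ?thesis using Suc less.prems by (simp add: fps_inv_Suc)
  qed
qed

lemma inv_affine:
  assumes "\<forall>i<m. (f::'a::field fps)$i = g$i" "m \<ge> 1"
  shows "inverse f $ m = inverse g $ m - (f$m - g$m) * inverse (f$0) ^ 2"
proof -
  obtain n where m: "m = Suc n" using assms(2) by (cases m) auto
  have f0: "f$0 = g$0" using assms m by auto
  have split: "\<And>h::nat\<Rightarrow>'a. (\<Sum>i=1..Suc n. h i) = (\<Sum>i=1..n. h i) + h (Suc n)" by simp
  have eq: "(\<Sum>i=1..n. f$i * inverse f $ (Suc n - i)) = (\<Sum>i=1..n. g$i * inverse g $ (Suc n - i))"
  proof (intro sum.cong refl)
    fix i assume i: "i \<in> {1..n}"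
    have "inverse f $ (Suc n - i) = inverse g $ (Suc n - i)"
      by (rule inv_dep) (use assms i m in auto)
    then show "f$i * inverse f $ (Suc n - i) = g$i * inverse g $ (Suc n - i)"
      using assms i m by auto
  qed
  show ?thesis
    by (simp only: m fps_inv_Suc split eq f0) (simp add: f0 power2_eq_square algebra_simps)
qed

lemma Gs_formula:
  assumes "x \<noteq> (\<lambda>_. 0)"
  shows "Gs x n = inverse (Abs_fps (\<lambda>j. x (fnz x + j))) $ (n + fnz x + 2)"
proof -
  let ?L = "seq_to_fls x"
  have sd: "fls_subdegree ?L = int (fnz x) + 1" by (rule subdeg_seq[OF assms])
  have bf: "fls_base_factor_to_fps ?L = Abs_fps (\<lambda>j. x (fnz x + j))"
    by (rule fps_ext) (simp add: fls_base_factor_to_fps_nth sd seq_to_fls_nth nat_add_distrib add.commute)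
  have "nat (int n + 1 + (int (fnz x) + 1)) = n + fnz x + 2" by simp
  then show ?thesis
    unfolding Gs_ap fr_def fls_inverse_def bf by (simp add: sd)
qed

definition mulB :: "'a::field poly \<Rightarrow> (nat \<Rightarrow> 'a) \<Rightarrow> nat \<Rightarrow> 'a" where
  "mulB B a = fr (poly_to_fls B * seq_to_fls a)"

lemma mulB_formula: "mulB B a n = (\<Sum>i\<le>degree B. coeff B i * a (n + i))"
proof -
  have "poly_to_fls B * seq_to_fls a = (\<Sum>i\<le>degree B. fls_const (coeff B i) * (fls_X_inv ^ i * seq_to_fls a))"
    unfolding poly_to_fls_def sum_distrib_right by (simp only: mult.assoc)
  then have "mulB B a n = (\<Sum>i\<le>degree B. coeff B i * (fls_X_inv ^ i * seq_to_fls a) $$ (int n + 1))"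
    by (simp only: mulB_def fr_def fls_sum_nth' fls_mult_const_nth)
  also have "\<dots> = (\<Sum>i\<le>degree B. coeff B i * a (n + i))"
    by (intro sum.cong refl) (simp only: fls_X_inv_power_times_conv_shift fls_shift_nth seq_to_fls_nth, simp add: nat_add_distrib)
  finally show ?thesis .
qed


abbreviation U where "U \<equiv> measure_pmf (pmf_of_set (UNIV::'a::{field,finite} set))"

lemma haar_eq: "(haarH :: (nat \<Rightarrow> 'a::{field,finite}) measure) = PiM UNIV (\<lambda>_. U)"
  by (simp add: haarH_def)

lemma space_haar [simp]: "space (haarH :: (nat \<Rightarrow> 'a::{field,finite}) measure) = UNIV"
  by (simp add: haarH_def space_PiM)

lemma prob_haar: "prob_space (haarH :: (nat \<Rightarrow> 'a::{field,finite}) measure)"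
  unfolding haarH_def by (intro prob_space_PiM prob_space_measure_pmf)

definition cylL :: "'a list \<Rightarrow> (nat \<Rightarrow> 'a) set" where
  "cylL xs = {a. \<forall>i<length xs. a i = xs ! i}"

definition pref :: "nat \<Rightarrow> (nat \<Rightarrow> 'a) \<Rightarrow> 'a list" where
  "pref n a = map a [0..<n]"

lemma length_pref [simp]: "length (pref n a) = n" by (simp add: pref_def)

lemma cylL_pref: "length xs = n \<Longrightarrow> a \<in> cylL xs \<longleftrightarrow> pref n a = xs"
proof
  assume l: "length xs = n" and "a \<in> cylL xs"
  then have "\<forall>i<n. a i = xs ! i" by (simp add: cylL_def)
  then show "pref n a = xs" using l by (intro nth_equalityI) (auto simp: pref_def)
next
  assume l: "length xs = n" and "pref n a = xs"
  then have "\<forall>i<n. xs ! i = a i" by (metis add_0 diff_zero length_upt nth_map nth_upt pref_def)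
  then show "a \<in> cylL xs" using l by (auto simp: cylL_def)
qed

lemma pref_eq_iff: "pref n a = pref n b \<longleftrightarrow> (\<forall>i<n. a i = b i)"
  by (auto simp: pref_def)

lemma cylL_emb: "cylL xs = prod_emb UNIV (\<lambda>_. U) {..<length xs} (PiE {..<length xs} (\<lambda>i. {xs ! i}))"
  by (simp add: set_eq_iff prod_emb_iff cylL_def restrict_PiE_iff Pi_iff Ball_def)

lemma cylL_sets [measurable]: "cylL xs \<in> sets (haarH :: (nat \<Rightarrow> 'a::{field,finite}) measure)"
  unfolding cylL_emb haarH_def by (rule sets_PiM_I) auto

lemma emeasure_cylL: "emeasure (haarH :: (nat \<Rightarrow> 'a::{field,finite}) measure) (cylL xs)
    = ennreal ((1 / real CARD('a)) ^ length xs)"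
proof -
  have "emeasure (haarH :: (nat \<Rightarrow> 'a) measure) (cylL xs) = (\<Prod>i<length xs. emeasure U {xs ! i})"
    unfolding cylL_emb haarH_def
    by (rule emeasure_PiM_emb) (auto intro: prob_space_measure_pmf)
  also have "\<dots> = (\<Prod>i<length xs. ennreal (1 / real CARD('a)))"
    by (intro prod.cong refl) (simp add: emeasure_pmf_single)
  also have "\<dots> = ennreal ((1 / real CARD('a)) ^ length xs)"
    by (simp add: ennreal_power)
  finally show ?thesis .
qed

lemma pref_set_eq: "S \<subseteq> {xs. length xs = n} \<Longrightarrow> {a. pref n a \<in> S} = (\<Union>xs\<in>S. cylL xs)"
  using cylL_pref by fastforce

lemma finite_lists_n: "finite {xs::'a::finite list. length xs = n}"
  using finite_lists_length_eq[of "UNIV::'a set" n] by simp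

lemma emeasure_pref:
  assumes "S \<subseteq> {xs. length xs = n}"
  shows "emeasure (haarH :: (nat \<Rightarrow> 'a::{field,finite}) measure) {a. pref n a \<in> S}
     = of_nat (card S) * ennreal ((1 / real CARD('a)) ^ n)"
proof -
  have fin: "finite S" using assms finite_subset finite_lists_n by blast
  have disj: "disjoint_family_on cylL S"
  proof (unfold disjoint_family_on_def, intro ballI impI)
    fix m m' assume "m \<in> S" "m' \<in> S" "m \<noteq> m'"
    moreover have lens: "length m = n" "length m' = n" using assms calculation by auto
    show "cylL m \<inter> cylL m' = {}"
    proof (rule equals0I)
      fix x assume "x \<in> cylL m \<inter> cylL m'"
      then have "pref n x = m" "pref n x = m'" using cylL_pref[OF lens(1)] cylL_pref[OF lens(2)] by auto
      then show False using \<open>m \<noteq> m'\<close> by simp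
    qed
  qed
  have "emeasure (haarH :: (nat \<Rightarrow> 'a) measure) {a. pref n a \<in> S} = (\<Sum>xs\<in>S. emeasure haarH (cylL xs))"
    unfolding pref_set_eq[OF assms] by (rule sum_emeasure[symmetric]) (use fin disj in auto)
  also have "\<dots> = (\<Sum>xs\<in>S. ennreal ((1 / real CARD('a)) ^ n))"
    by (intro sum.cong refl) (use assms in \<open>auto simp: emeasure_cylL\<close>)
  finally show ?thesis by simp
qed

lemma pref_sets [measurable]: "{a. pref n a \<in> S} \<in> sets (haarH :: (nat \<Rightarrow> 'a::{field,finite}) measure)"
proof -
  have "{a. pref n a \<in> S} = {a. pref n a \<in> S \<inter> {xs. length xs = n}}" by auto
  also have "\<dots> = (\<Union>xs\<in>S \<inter> {xs. length xs = n}. cylL xs)" by (rule pref_set_eq) auto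
  also have "\<dots> \<in> sets haarH"
    by (intro sets.finite_UN) (auto intro: finite_subset[OF _ finite_lists_n])
  finally show ?thesis .
qed


lemma tri_card:
  fixes g :: "nat \<Rightarrow> 'a::finite list \<Rightarrow> 'a"
  assumes P: "P \<subseteq> {xs. length xs = k}"
  assumes bij: "\<And>n xs. length xs = k + n \<Longrightarrow> take k xs \<in> P \<Longrightarrow> bij (\<lambda>v. g n (xs @ [v]))"
  shows "card {xs. length xs = k + N \<and> take k xs \<in> P \<and> (\<forall>n<N. g n (take (k+n+1) xs) = c n)} = card P"
proof (induction N)
  case 0
  have "{xs. length xs = k + 0 \<and> take k xs \<in> P \<and> (\<forall>n<0. g n (take (k+n+1) xs) = c n)} = P"
    using P by auto
  then show ?case by simp
next
  case (Suc N)
  define S where "S = {xs. length xs = k + N \<and> take k xs \<in> P \<and> (\<forall>n<N. g n (take (k+n+1) xs) = c n)}"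
  define S' where "S' = {xs. length xs = k + Suc N \<and> take k xs \<in> P \<and> (\<forall>n<Suc N. g n (take (k+n+1) xs) = c n)}"
  have bb: "bij_betw butlast S' S"
  proof (rule bij_betw_imageI)
    show "inj_on butlast S'"
    proof (rule inj_onI)
      fix xs ys assume xs: "xs \<in> S'" and ys: "ys \<in> S'" and e: "butlast xs = butlast ys"
      have nx: "xs \<noteq> []" and ny: "ys \<noteq> []" using xs ys by (auto simp: S'_def)
      have lx: "length (butlast xs) = k + N" using xs by (simp add: S'_def)
      have tk: "take k (butlast xs) \<in> P" using xs by (simp add: S'_def take_butlast)
      have gx: "g N (butlast xs @ [last xs]) = c N" using xs nx by (auto simp: S'_def)
      have gy: "g N (butlast xs @ [last ys]) = c N" using ys ny e by (auto simp: S'_def)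
      have "last xs = last ys" using bij[OF lx tk] gx gy unfolding bij_def inj_def by metis
      then show "xs = ys" using e nx ny by (metis append_butlast_last_id)
    qed
  next
    show "butlast ` S' = S"
    proof
      show "butlast ` S' \<subseteq> S"
      proof
        fix ys assume "ys \<in> butlast ` S'"
        then obtain xs where xs: "xs \<in> S'" and ys: "ys = butlast xs" by auto
        have "\<forall>n<N. take (k+n+1) (butlast xs) = take (k+n+1) xs"
          using xs by (auto simp: S'_def take_butlast)
        then show "ys \<in> S" using xs ys by (auto simp: S'_def S_def take_butlast)
      qed
    next
      show "S \<subseteq> butlast ` S'"
      proof
        fix ys assume ys: "ys \<in> S"
        have l: "length ys = k + N" and tk: "take k ys \<in> P" using ys by (auto simp: S_def)
        from bij[OF l tk] obtain v where v: "g N (ys @ [v]) = c N" unfolding bij_def surj_def by metis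
        have "ys @ [v] \<in> S'"
        proof -
          have "\<forall>n<N. take (k+n+1) (ys @ [v]) = take (k+n+1) ys" using l by auto
          moreover have "take (k+N+1) (ys @ [v]) = ys @ [v]" using l by auto
          ultimately show ?thesis using ys v l by (auto simp: S_def S'_def less_Suc_eq)
        qed
        then show "ys \<in> butlast ` S'" by (metis butlast_snoc image_eqI)
      qed
    qed
  qed
  then have "card S' = card S" by (rule bij_betw_same_card)
  then show ?case using Suc.IH by (simp add: S_def S'_def)
qed


definition extL :: "'a list \<Rightarrow> nat \<Rightarrow> 'a" where
  "extL xs = (\<lambda>i. if i < length xs then xs ! i else undefined)"

lemma pref_extL: "m \<le> length xs \<Longrightarrow> pref m (extL xs) = take m xs"
  by (auto simp: pref_def extL_def intro: nth_equalityI)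

lemma take_pref: "m \<le> n \<Longrightarrow> take m (pref n a) = pref m a"
  by (simp add: pref_def take_map)

lemma tri_measure:
  fixes \<Phi> :: "nat \<Rightarrow> (nat \<Rightarrow> 'a::{field,finite}) \<Rightarrow> 'a"
  assumes P: "P \<subseteq> {xs. length xs = k}"
  assumes dep: "\<And>n a b. pref k a \<in> P \<Longrightarrow> pref (k+n+1) a = pref (k+n+1) b \<Longrightarrow> \<Phi> n a = \<Phi> n b"
  assumes inj: "\<And>n a. pref k a \<in> P \<Longrightarrow> inj (\<lambda>v. \<Phi> n (a(k+n := v)))"
  shows "emeasure (haarH :: (nat \<Rightarrow> 'a) measure) {a. pref k a \<in> P \<and> (\<forall>n<N. \<Phi> n a = c n)}
     = emeasure haarH {a. pref k a \<in> P} * ennreal ((1 / real CARD('a)) ^ N)"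
proof -
  define g where "g n xs = \<Phi> n (extL xs)" for n xs
  define S where "S = {xs. length xs = k + N \<and> take k xs \<in> P \<and> (\<forall>n<N. g n (take (k+n+1) xs) = c n)}"
  have bij: "bij (\<lambda>v. g n (xs @ [v]))" if l: "length xs = k + n" and tk: "take k xs \<in> P" for n xs
  proof -
    define a0 where "a0 = extL (xs @ [undefined])"
    have pa: "pref k (a0(k+n := v)) \<in> P" for v
    proof -
      have "pref k (a0(k+n := v)) = pref k a0" by (auto simp: pref_def)
      also have "\<dots> = take k xs" unfolding a0_def using l by (simp add: pref_extL)
      finally show ?thesis using tk by simp
    qed
    have eq: "g n (xs @ [v]) = \<Phi> n (a0(k+n := v))" for v
    proof -
      have "pref (k+n+1) (a0(k+n := v)) = pref (k+n+1) (extL (xs @ [v]))"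
        using l by (auto simp: pref_def a0_def extL_def nth_append)
      then show ?thesis unfolding g_def using dep[OF pa] by metis
    qed
    have "inj (\<lambda>v. \<Phi> n ((a0(k+n := undefined))(k+n := v)))" by (rule inj) (rule pa)
    then have "inj (\<lambda>v. g n (xs @ [v]))" unfolding eq by simp
    then show ?thesis using finite_UNIV_inj_surj[of "\<lambda>v. g n (xs @ [v])"] by (simp add: bij_def)
  qed
  have cardS: "card S = card P" unfolding S_def by (rule tri_card[OF P bij])
  have set_eq: "{a. pref k a \<in> P \<and> (\<forall>n<N. \<Phi> n a = c n)} = {a. pref (k+N) a \<in> S}"
  proof (intro set_eqI iffI)
    fix a assume a: "a \<in> {a. pref k a \<in> P \<and> (\<forall>n<N. \<Phi> n a = c n)}"
    have "g n (take (k+n+1) (pref (k+N) a)) = c n" if "n < N" for n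
    proof -
      have "take (k+n+1) (pref (k+N) a) = pref (k+n+1) a" using that by (simp add: take_pref)
      moreover have "pref (k+n+1) (extL (pref (k+n+1) a)) = pref (k+n+1) a" by (simp add: pref_extL)
      ultimately show ?thesis using a that dep[of a n "extL (pref (k+n+1) a)"] by (simp add: g_def)
    qed
    then show "a \<in> {a. pref (k+N) a \<in> S}" using a by (simp add: S_def take_pref)
  next
    fix a assume a: "a \<in> {a. pref (k+N) a \<in> S}"
    then have pk: "pref k a \<in> P" by (simp add: S_def take_pref)
    have "\<Phi> n a = c n" if "n < N" for n
    proof -
      have "g n (take (k+n+1) (pref (k+N) a)) = c n" using a that by (simp add: S_def)
      moreover have "take (k+n+1) (pref (k+N) a) = pref (k+n+1) a" using that by (simp add: take_pref)
      moreover have "pref (k+n+1) (extL (pref (k+n+1) a)) = pref (k+n+1) a" by (simp add: pref_extL)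
      ultimately show ?thesis using pk dep[of a n "extL (pref (k+n+1) a)"] by (simp add: g_def)
    qed
    then show "a \<in> {a. pref k a \<in> P \<and> (\<forall>n<N. \<Phi> n a = c n)}" using pk by simp
  qed
  have "emeasure (haarH :: (nat \<Rightarrow> 'a) measure) {a. pref (k+N) a \<in> S} = of_nat (card S) * ennreal ((1 / real CARD('a)) ^ (k+N))"
    by (rule emeasure_pref) (auto simp: S_def)
  also have "\<dots> = (of_nat (card P) * ennreal ((1 / real CARD('a)) ^ k)) * ennreal ((1 / real CARD('a)) ^ N)"
    by (simp add: cardS power_add ennreal_mult mult.assoc)
  also have "of_nat (card P) * ennreal ((1 / real CARD('a)) ^ k) = emeasure (haarH :: (nat \<Rightarrow> 'a) measure) {a. pref k a \<in> P}"
    by (rule emeasure_pref[symmetric, OF P])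
  finally show ?thesis unfolding set_eq .
qed


lemma countable_lists_fin: "countable (UNIV :: 'a::finite list set)"
  by simp

lemma singleton_sets: "{x} \<in> sets (haarH :: (nat \<Rightarrow> 'a::{field,finite}) measure)"
proof -
  have "{x} = (\<Inter>m. cylL (pref m x))"
  proof (intro set_eqI iffI)
    fix a assume "a \<in> (\<Inter>m. cylL (pref m x))"
    then have "pref (Suc i) a = pref (Suc i) x" for i using cylL_pref[of "pref (Suc i) x" "Suc i" a] by auto
    then have "a i = x i" for i by (auto simp: pref_eq_iff)
    then show "a \<in> {x}" by auto
  qed (auto simp: cylL_pref)
  also have "\<dots> \<in> sets haarH" by (intro sets.countable_INT) auto
  finally show ?thesis .
qed

lemma countable_sets: "countable C \<Longrightarrow> C \<in> sets (haarH :: (nat \<Rightarrow> 'a::{field,finite}) measure)"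
proof -
  assume C: "countable C"
  have "C = (\<Union>x\<in>C. {x})" by auto
  also have "\<dots> \<in> sets haarH" by (intro sets.countable_UN'' C singleton_sets)
  finally show ?thesis .
qed

lemma lc_meas:
  fixes g :: "(nat \<Rightarrow> 'a::{field,finite}) \<Rightarrow> 'b"
  assumes C: "countable C"
  assumes lc: "\<And>a. a \<notin> C \<Longrightarrow> \<exists>m. \<forall>b. pref m b = pref m a \<longrightarrow> g b = g a"
  shows "g \<in> measurable haarH (count_space UNIV)"
proof (rule measurableI)
  fix A :: "'b set"
  define L where "L = {xs. cylL xs \<subseteq> g -` A}"
  have sub: "g -` A \<subseteq> (\<Union>xs\<in>L. cylL xs) \<union> (C \<inter> g -` A)"
  proof
    fix a assume a: "a \<in> g -` A"
    show "a \<in> (\<Union>xs\<in>L. cylL xs) \<union> (C \<inter> g -` A)"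
    proof (cases "a \<in> C")
      case True then show ?thesis using a by blast
    next
      case False
      then obtain m where m: "\<forall>b. pref m b = pref m a \<longrightarrow> g b = g a" using lc by blast
      have "cylL (pref m a) \<subseteq> g -` A"
      proof
        fix b assume "b \<in> cylL (pref m a)"
        then have "pref m b = pref m a" using cylL_pref[of "pref m a" m b] by simp
        then have "g b = g a" using m by blast
        then show "b \<in> g -` A" using a by simp
      qed
      then have "pref m a \<in> L" by (simp add: L_def)
      moreover have "a \<in> cylL (pref m a)" using cylL_pref[of "pref m a" m a] by simp
      ultimately show ?thesis by blast
    qed
  qed
  have sup: "(\<Union>xs\<in>L. cylL xs) \<union> (C \<inter> g -` A) \<subseteq> g -` A" by (auto simp: L_def)
  have "g -` A \<inter> space haarH = (\<Union>xs\<in>L. cylL xs) \<union> (C \<inter> g -` A)"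
    using equalityI[OF sub sup] by simp
  also have "\<dots> \<in> sets haarH"
  proof (rule sets.Un)
    show "(\<Union>xs\<in>L. cylL xs) \<in> sets haarH"
      by (rule sets.countable_UN'') (auto intro: countable_subset[OF _ countable_lists_fin])
    show "C \<inter> g -` A \<in> sets haarH" by (rule countable_sets) (rule countable_subset[OF _ C], blast)
  qed
  finally show "g -` A \<inter> space haarH \<in> sets haarH" .
qed simp

lemma meas_into_haar:
  fixes F :: "(nat \<Rightarrow> 'a::{field,finite}) \<Rightarrow> (nat \<Rightarrow> 'a)"
  assumes "\<And>n. (\<lambda>a. F a n) \<in> measurable haarH (count_space UNIV)"
  shows "F \<in> measurable haarH haarH"
proof -
  have "(\<lambda>a n. F a n) \<in> measurable haarH (PiM UNIV (\<lambda>_. U))"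
    by (rule measurable_PiM_single') (use assms in \<open>auto simp: measurable_cong_sets\<close>)
  then show ?thesis by (simp add: haarH_def)
qed

lemma emb_pref:
  fixes A :: "nat \<Rightarrow> 'a::{field,finite} set"
  assumes J: "finite J"
  defines "n \<equiv> (if J = {} then 0 else Suc (Max J))"
  shows "prod_emb UNIV (\<lambda>_. U) J (PiE J A) = {a. pref n a \<in> {xs. length xs = n \<and> (\<forall>j\<in>J. xs ! j \<in> A j)}}"
proof -
  have jn: "j \<in> J \<Longrightarrow> j < n" for j using J by (auto simp: n_def le_imp_less_Suc)
  have e1: "a \<in> prod_emb UNIV (\<lambda>_. U) J (PiE J A) \<longleftrightarrow> (\<forall>j\<in>J. a j \<in> A j)" for a
    by (simp add: prod_emb_iff restrict_PiE_iff Pi_iff)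
  have e2: "pref n a ! j = a j" if "j \<in> J" for a :: "nat \<Rightarrow> 'a" and j
    using jn[OF that] by (simp add: pref_def)
  show ?thesis
  proof (intro set_eqI)
    fix a
    have "(\<forall>j\<in>J. a j \<in> A j) \<longleftrightarrow> (\<forall>j\<in>J. pref n a ! j \<in> A j)" by (rule ball_cong) (auto simp: e2)
    then show "a \<in> prod_emb UNIV (\<lambda>_. U) J (PiE J A) \<longleftrightarrow> a \<in> {a. pref n a \<in> {xs. length xs = n \<and> (\<forall>j\<in>J. xs ! j \<in> A j)}}"
      using e1 by simp
  qed
qed

lemma meas_pres:
  fixes F :: "(nat \<Rightarrow> 'a::{field,finite}) \<Rightarrow> (nat \<Rightarrow> 'a)"
  assumes F: "F \<in> measurable haarH haarH"
  assumes cyl: "\<And>xs. emeasure haarH (F -` cylL xs) = ennreal ((1 / real CARD('a)) ^ length xs)"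
  shows "distr haarH haarH F = haarH"
proof (rule measure_eqI_PiM_infinite)
  show "sets (distr haarH haarH F) = sets (PiM UNIV (\<lambda>_. U))" by (simp add: haarH_def)
  show "sets haarH = sets (PiM UNIV (\<lambda>_. U :: 'a measure))" by (simp add: haarH_def)
  interpret prob_space haarH by (rule prob_haar)
  have "prob_space (distr haarH haarH F)" by (rule prob_space_distr[OF F])
  then show "finite_measure (distr haarH haarH F)" by (rule prob_space.finite_measure)
  fix A :: "nat \<Rightarrow> 'a set" and J :: "nat set"
  assume J: "finite J"
  define n where "n = (if J = {} then 0 else Suc (Max J))"
  define S where "S = {xs. length xs = n \<and> (\<forall>j\<in>J. xs ! j \<in> A j)}"
  have X: "prod_emb UNIV (\<lambda>_. U) J (PiE J A) = {a. pref n a \<in> S}"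
    unfolding S_def n_def by (rule emb_pref[OF J])
  have S: "S \<subseteq> {xs. length xs = n}" by (auto simp: S_def)
  have fin: "finite S" using S finite_subset finite_lists_n by blast
  have "F -` {a. pref n a \<in> S} = (\<Union>xs\<in>S. F -` cylL xs)"
    unfolding pref_set_eq[OF S] by auto
  moreover have "emeasure haarH (\<Union>xs\<in>S. F -` cylL xs) = (\<Sum>xs\<in>S. emeasure haarH (F -` cylL xs))"
  proof (rule sum_emeasure[symmetric])
    show "(\<lambda>xs. F -` cylL xs) ` S \<subseteq> sets haarH"
      using measurable_sets[OF F cylL_sets] by auto
    show "disjoint_family_on (\<lambda>xs. F -` cylL xs) S"
    proof (unfold disjoint_family_on_def, intro ballI impI)
      fix m m' assume mm: "m \<in> S" "m' \<in> S" "m \<noteq> m'"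
      then have lens: "length m = n" "length m' = n" using S by auto
      show "F -` cylL m \<inter> F -` cylL m' = {}"
      proof (rule equals0I)
        fix x assume "x \<in> F -` cylL m \<inter> F -` cylL m'"
        then have "pref n (F x) = m" "pref n (F x) = m'" using cylL_pref[OF lens(1)] cylL_pref[OF lens(2)] by auto
        then show False using mm by simp
      qed
    qed
  qed (rule fin)
  moreover have "(\<Sum>xs\<in>S. emeasure haarH (F -` cylL xs)) = (\<Sum>xs\<in>S. ennreal ((1 / real CARD('a)) ^ n))"
    by (intro sum.cong refl) (use S in \<open>auto simp: cyl\<close>)
  ultimately have "emeasure haarH (F -` {a. pref n a \<in> S}) = of_nat (card S) * ennreal ((1 / real CARD('a)) ^ n)"
    by simp
  also have "\<dots> = emeasure haarH {a. pref n a \<in> S}" by (rule emeasure_pref[symmetric, OF S])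
  finally have "emeasure haarH (F -` {a. pref n a \<in> S}) = emeasure haarH {a. pref n a \<in> S}" .
  then show "emeasure (distr haarH haarH F) (prod_emb UNIV (\<lambda>_. U) J (PiE J A)) =
        emeasure haarH (prod_emb UNIV (\<lambda>_. U) J (PiE J A))"
    unfolding X by (subst emeasure_distr[OF F]) auto
qed


lemma card_ge2: "CARD('a::{field,finite}) \<ge> 2"
proof -
  have "{0::'a, 1} \<subseteq> UNIV" by simp
  then have "card {0::'a, 1} \<le> CARD('a)" by (rule card_mono[rotated]) simp
  then show ?thesis by simp
qed

lemma singleton_null: "{x} \<in> null_sets (haarH :: (nat \<Rightarrow> 'a::{field,finite}) measure)"
proof -
  interpret prob_space "haarH :: (nat \<Rightarrow> 'a) measure" by (rule prob_haar)
  let ?q = "1 / real CARD('a)"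
  have q: "0 < ?q" "?q < 1" using card_ge2[where 'a='a] by auto
  have le: "measure haarH {x} \<le> ?q ^ m" for m
  proof -
    have "{x} \<subseteq> cylL (pref m x)" using cylL_pref[of "pref m x" m x] by simp
    then have "measure haarH {x} \<le> measure haarH (cylL (pref m x))"
      by (intro finite_measure_mono) auto
    also have "\<dots> = ?q ^ m" using emeasure_cylL[of "pref m x"] q
      by (simp add: measure_def)
    finally show ?thesis .
  qed
  have "measure haarH {x} \<le> 0"
  proof (rule field_le_epsilon)
    fix e :: real assume "0 < e"
    then obtain m where "?q ^ m < e" using real_arch_pow_inv q by blast
    then show "measure haarH {x} \<le> 0 + e" using le[of m] by simp
  qed
  then have "measure haarH {x} = 0" by (simp add: measure_le_0_iff)
  then show ?thesis using singleton_sets[of x] by (intro null_setsI) (auto simp: emeasure_eq_measure)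
qed

lemma countable_null: "countable C \<Longrightarrow> C \<in> null_sets (haarH :: (nat \<Rightarrow> 'a::{field,finite}) measure)"
proof -
  assume C: "countable C"
  have "C = (\<Union>x\<in>C. {x})" by auto
  also have "\<dots> \<in> null_sets haarH" by (intro null_sets_UN' C singleton_null)
  finally show ?thesis .
qed

definition Wset :: "nat \<Rightarrow> (nat \<Rightarrow> 'a::zero) set" where
  "Wset w = {x. (\<forall>i<w. x i = 0) \<and> x w \<noteq> 0}"

lemma Wset_fnz: "x \<in> Wset w \<Longrightarrow> x \<noteq> (\<lambda>_. 0) \<and> fnz x = w"
proof -
  assume x: "x \<in> Wset w"
  then have nz: "x \<noteq> (\<lambda>_. 0)" by (auto simp: Wset_def)
  have "fnz x = w" unfolding fnz_def
    by (rule Least_equality) (use x in \<open>auto simp: Wset_def not_less[symmetric]\<close>)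
  with nz show ?thesis by simp
qed

lemma in_Wset: "x \<noteq> (\<lambda>_. 0) \<Longrightarrow> x \<in> Wset (fnz x)"
  using fnz[of x] by (auto simp: Wset_def)

definition PW :: "nat \<Rightarrow> 'a::zero list set" where
  "PW w = {xs. length xs = 2*w+2 \<and> (\<forall>i<w. xs ! i = 0) \<and> xs ! w \<noteq> 0}"

lemma PW_iff: "pref (2*w+2) x \<in> PW w \<longleftrightarrow> x \<in> Wset w"
  by (auto simp: PW_def Wset_def pref_def nth_append)

lemma Gs_dep:
  assumes x: "x \<in> Wset w" and e: "pref (2*w+2+n+1) x = pref (2*w+2+n+1) y"
  shows "Gs x n = Gs y n"
proof -
  have ex: "\<forall>i<2*w+2+n+1. x i = y i" using e by (simp add: pref_eq_iff)
  have y: "y \<in> Wset w" using x ex by (auto simp: Wset_def)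
  from Wset_fnz[OF x] Wset_fnz[OF y] have fx: "fnz x = w" "x \<noteq> (\<lambda>_. 0)" and fy: "fnz y = w" "y \<noteq> (\<lambda>_. 0)" by auto
  have "inverse (Abs_fps (\<lambda>j. x (w + j))) $ (n + w + 2) = inverse (Abs_fps (\<lambda>j. y (w + j))) $ (n + w + 2)"
    by (rule inv_dep) (use ex in auto)
  then show ?thesis using Gs_formula[OF fx(2), of n] Gs_formula[OF fy(2), of n] fx fy by simp
qed

lemma Gs_inj:
  assumes x: "x \<in> Wset w"
  shows "inj (\<lambda>v. Gs (x(2*w+2+n := v)) n)"
proof (rule injI)
  fix v v' assume eq: "Gs (x(2*w+2+n := v)) n = Gs (x(2*w+2+n := v')) n"
  have W: "x(2*w+2+n := u) \<in> Wset w" for u using x by (auto simp: Wset_def)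
  from Wset_fnz[OF W] have f: "fnz (x(2*w+2+n := u)) = w" "x(2*w+2+n := u) \<noteq> (\<lambda>_. 0)" for u by auto
  define fv where "fv u = Abs_fps (\<lambda>j. (x(2*w+2+n := u)) (w + j))" for u
  have G: "Gs (x(2*w+2+n := u)) n = inverse (fv u) $ (n + w + 2)" for u
  proof -
    have "Gs (x(2*w+2+n := u)) n = inverse (Abs_fps (\<lambda>j. (x(2*w+2+n := u)) (fnz (x(2*w+2+n := u)) + j))) $ (n + fnz (x(2*w+2+n := u)) + 2)"
      by (rule Gs_formula[OF f(2)])
    then show ?thesis unfolding f(1) fv_def .
  qed
  have "inverse (fv v) $ (n + w + 2) = inverse (fv v') $ (n + w + 2) - (fv v $ (n+w+2) - fv v' $ (n+w+2)) * inverse (fv v $ 0) ^ 2"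
    by (rule inv_affine) (auto simp: fv_def)
  moreover have "fv v $ (n+w+2) = v" "fv v' $ (n+w+2) = v'" by (simp_all add: fv_def)
  moreover have "fv v $ 0 = x w" using x by (simp add: fv_def)
  moreover have "x w \<noteq> 0" using x by (simp add: Wset_def)
  ultimately show "v = v'" using eq G by simp
qed

lemma mulB_dep:
  assumes e: "pref (degree B + n + 1) x = pref (degree B + n + 1) y"
  shows "mulB B x n = mulB B y n"
proof -
  have ex: "\<forall>i<degree B + n + 1. x i = y i" using e by (simp add: pref_eq_iff)
  show ?thesis unfolding mulB_formula by (intro sum.cong refl) (use ex in auto)
qed

lemma mulB_inj:
  assumes B: "lead_coeff B = 1"
  shows "inj (\<lambda>v. mulB B (x(degree B + n := v)) n)"
proof -
  have "mulB B (x(degree B + n := v)) n = (\<Sum>i<degree B. coeff B i * x (n + i)) + v" for v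
  proof -
    have "mulB B (x(degree B + n := v)) n = (\<Sum>i<degree B. coeff B i * (x(degree B + n := v)) (n + i)) + coeff B (degree B) * v"
      unfolding mulB_formula by (simp add: lessThan_Suc_atMost[symmetric] add.commute)
    also have "(\<Sum>i<degree B. coeff B i * (x(degree B + n := v)) (n + i)) = (\<Sum>i<degree B. coeff B i * x (n + i))"
      by (intro sum.cong refl) auto
    also have "coeff B (degree B) * v = v" using B by simp
    finally show ?thesis .
  qed
  then show ?thesis by (auto intro: injI)
qed


lemma Gs_meas: "Gs \<in> measurable (haarH :: (nat \<Rightarrow> 'a::{field,finite}) measure) haarH"
proof (rule meas_into_haar)
  fix n
  show "(\<lambda>a. Gs a n) \<in> measurable (haarH :: (nat \<Rightarrow> 'a) measure) (count_space UNIV)"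
  proof (rule lc_meas[where C = "{\<lambda>_. 0}"])
    fix a :: "nat \<Rightarrow> 'a" assume "a \<notin> {\<lambda>_. 0}"
    then have a: "a \<in> Wset (fnz a)" by (intro in_Wset) auto
    show "\<exists>m. \<forall>b. pref m b = pref m a \<longrightarrow> Gs b n = Gs a n"
      using Gs_dep[OF a] by metis
  qed simp
qed

lemma mulB_meas: "mulB B \<in> measurable (haarH :: (nat \<Rightarrow> 'a::{field,finite}) measure) haarH"
proof (rule meas_into_haar)
  fix n
  show "(\<lambda>a. mulB B a n) \<in> measurable (haarH :: (nat \<Rightarrow> 'a) measure) (count_space UNIV)"
  proof (rule lc_meas[where C = "{}"])
    fix a :: "nat \<Rightarrow> 'a"
    show "\<exists>m. \<forall>b. pref m b = pref m a \<longrightarrow> mulB B b n = mulB B a n"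
      using mulB_dep by metis
  qed simp
qed

lemma Wset_sets: "Wset w \<in> sets (haarH :: (nat \<Rightarrow> 'a::{field,finite}) measure)"
proof -
  have "Wset w = {a::nat \<Rightarrow> 'a. pref (2*w+2) a \<in> PW w}" using PW_iff by blast
  then show ?thesis using pref_sets by metis
qed

lemma Wset_disj: "disjoint_family (Wset :: nat \<Rightarrow> (nat \<Rightarrow> 'a::zero) set)"
  unfolding disjoint_family_on_def using Wset_fnz by blast

lemma Wset_Un: "(\<Union>w. Wset w) = UNIV - {\<lambda>_. 0::'a::zero}"
  using Wset_fnz in_Wset by blast

lemma Gs_cyl: "emeasure (haarH :: (nat \<Rightarrow> 'a::{field,finite}) measure) (Gs -` cylL xs)
    = ennreal ((1 / real CARD('a)) ^ length xs)"
proof -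
  interpret prob_space "haarH :: (nat \<Rightarrow> 'a) measure" by (rule prob_haar)
  let ?q = "ennreal ((1 / real CARD('a)) ^ length xs)"
  define E where "E = Gs -` cylL xs"
  have E: "E \<in> sets haarH" unfolding E_def using measurable_sets[OF Gs_meas cylL_sets] by simp
  have WE: "Wset w \<inter> E = {a. pref (2*w+2) a \<in> PW w \<and> (\<forall>n<length xs. Gs a n = xs ! n)}" for w
    using PW_iff by (auto simp: E_def cylL_def)
  have mWE: "emeasure haarH (Wset w \<inter> E) = emeasure haarH (Wset w :: (nat \<Rightarrow> 'a) set) * ?q" for w
  proof -
    have "emeasure haarH {a. pref (2*w+2) a \<in> PW w \<and> (\<forall>n<length xs. Gs a n = xs ! n)}
        = emeasure haarH {a::nat \<Rightarrow> 'a. pref (2*w+2) a \<in> PW w} * ?q"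
    proof (rule tri_measure)
      show "PW w \<subseteq> {xs. length xs = 2*w+2}" by (auto simp: PW_def)
      fix n and a b :: "nat \<Rightarrow> 'a"
      assume "pref (2*w+2) a \<in> PW w"
      then have a: "a \<in> Wset w" using PW_iff by blast
      show "pref (2*w+2+n+1) a = pref (2*w+2+n+1) b \<Longrightarrow> Gs a n = Gs b n" by (rule Gs_dep[OF a])
      show "inj (\<lambda>v. Gs (a(2*w+2+n := v)) n)" by (rule Gs_inj[OF a])
    qed
    moreover have "{a::nat \<Rightarrow> 'a. pref (2*w+2) a \<in> PW w} = Wset w" using PW_iff by blast
    ultimately show ?thesis using WE by simp
  qed
  have split: "E = (\<Union>w. Wset w \<inter> E) \<union> (E \<inter> {\<lambda>_. 0})" using in_Wset by blast
  have null: "E \<inter> {\<lambda>_. 0} \<in> null_sets haarH"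
    by (rule countable_null) (auto intro: countable_subset[of _ "{\<lambda>_. 0}"])
  have "emeasure haarH E = emeasure haarH (\<Union>w. Wset w \<inter> E)"
    by (subst split, rule emeasure_Un_null_set[OF _ null]) (use Wset_sets E in auto)
  also have "\<dots> = (\<Sum>w. emeasure haarH (Wset w \<inter> E))"
  proof (rule suminf_emeasure[symmetric])
    show "range (\<lambda>w. Wset w \<inter> E) \<subseteq> sets haarH" using Wset_sets E by auto
    show "disjoint_family (\<lambda>w. Wset w \<inter> E)"
      using Wset_disj unfolding disjoint_family_on_def by blast
  qed
  also have "\<dots> = (\<Sum>w. emeasure haarH (Wset w :: (nat \<Rightarrow> 'a) set)) * ?q" by (simp add: mWE)
  also have "(\<Sum>w. emeasure haarH (Wset w :: (nat \<Rightarrow> 'a) set)) = emeasure haarH (\<Union>w. Wset w :: (nat \<Rightarrow> 'a) set)"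
    by (rule suminf_emeasure) (use Wset_sets Wset_disj in auto)
  also have "\<dots> = emeasure haarH (UNIV :: (nat \<Rightarrow> 'a) set)" unfolding Wset_Un
    by (rule emeasure_Diff_null_set[OF singleton_null]) (metis sets.top space_haar)
  also have "\<dots> = 1" using emeasure_space_1 by simp
  finally show ?thesis by (simp add: E_def)
qed

lemma mulB_cyl:
  assumes B: "lead_coeff B = 1"
  shows "emeasure (haarH :: (nat \<Rightarrow> 'a::{field,finite}) measure) (mulB B -` cylL xs)
    = ennreal ((1 / real CARD('a)) ^ length xs)"
proof -
  interpret prob_space "haarH :: (nat \<Rightarrow> 'a) measure" by (rule prob_haar)
  have e: "mulB B -` cylL xs = {a. pref (degree B) a \<in> {ys. length ys = degree B} \<and> (\<forall>n<length xs. mulB B a n = xs ! n)}"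
    by (auto simp: cylL_def)
  have "emeasure haarH {a. pref (degree B) a \<in> {ys. length ys = degree B} \<and> (\<forall>n<length xs. mulB B a n = xs ! n)}
      = emeasure haarH {a::nat \<Rightarrow> 'a. pref (degree B) a \<in> {ys. length ys = degree B}} * ennreal ((1 / real CARD('a)) ^ length xs)"
  proof (rule tri_measure)
    fix n and a b :: "nat \<Rightarrow> 'a"
    show "pref (degree B + n + 1) a = pref (degree B + n + 1) b \<Longrightarrow> mulB B a n = mulB B b n" by (rule mulB_dep)
    show "inj (\<lambda>v. mulB B (a(degree B + n := v)) n)" by (rule mulB_inj[OF B])
  qed simp
  moreover have "{a::nat \<Rightarrow> 'a. pref (degree B) a \<in> {ys. length ys = degree B}} = space haarH" by simp
  ultimately show ?thesis unfolding e using emeasure_space_1 by simp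
qed

lemma Gs_distr: "distr (haarH :: (nat \<Rightarrow> 'a::{field,finite}) measure) haarH Gs = haarH"
  by (rule meas_pres[OF Gs_meas Gs_cyl])

lemma mulB_distr: "lead_coeff B = 1 \<Longrightarrow> distr (haarH :: (nat \<Rightarrow> 'a::{field,finite}) measure) haarH (mulB B) = haarH"
  by (rule meas_pres[OF mulB_meas mulB_cyl])


lemma Dg_meas: "Dg \<in> measurable (haarH :: (nat \<Rightarrow> 'a::{field,finite}) measure) (count_space UNIV)"
proof (rule lc_meas[where C = "{\<lambda>_. 0}"])
  fix a :: "nat \<Rightarrow> 'a" assume "a \<notin> {\<lambda>_. 0}"
  then have a: "a \<in> Wset (fnz a)" by (intro in_Wset) auto
  have "Dg b = Dg a" if "pref (fnz a + 1) b = pref (fnz a + 1) a" for b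
  proof -
    have "\<forall>i<fnz a + 1. b i = a i" using that by (simp add: pref_eq_iff)
    then have "b \<in> Wset (fnz a)" using a by (auto simp: Wset_def)
    then show ?thesis using Wset_fnz[OF a] Wset_fnz[of b] by (simp add: Dg_eq)
  qed
  then show "\<exists>m. \<forall>b. pref m b = pref m a \<longrightarrow> Dg b = Dg a" by blast
qed simp

definition Psi :: "'a::field poly \<Rightarrow> nat \<Rightarrow> (nat \<Rightarrow> 'a) \<Rightarrow> nat \<Rightarrow> 'a" where
  "Psi B h a = (Gs ^^ h) (mulB B a)"

lemma Gs_pow_meas: "(Gs ^^ h) \<in> measurable (haarH :: (nat \<Rightarrow> 'a::{field,finite}) measure) haarH"
proof (induction h)
  case 0 then show ?case by simp
next
  case (Suc h)
  have "(\<lambda>x. Gs ((Gs ^^ h) x)) \<in> measurable (haarH :: (nat \<Rightarrow> 'a) measure) haarH"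
    by (rule measurable_compose[OF Suc Gs_meas])
  then show ?case by (simp add: o_def)
qed

lemma Psi_meas: "Psi B h \<in> measurable (haarH :: (nat \<Rightarrow> 'a::{field,finite}) measure) haarH"
  unfolding Psi_def by (rule measurable_compose[OF mulB_meas Gs_pow_meas])

lemma Gs_pow_distr: "distr (haarH :: (nat \<Rightarrow> 'a::{field,finite}) measure) haarH (Gs ^^ h) = haarH"
proof (induction h)
  case 0 then show ?case by (simp add: distr_id2)
next
  case (Suc h)
  have "distr (haarH :: (nat \<Rightarrow> 'a) measure) haarH (Gs ^^ Suc h) = distr haarH haarH (Gs \<circ> (Gs ^^ h))"
    by (simp add: funpow_Suc_right[symmetric] funpow.simps)
  also have "\<dots> = distr (distr haarH haarH (Gs ^^ h)) haarH Gs"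
    by (rule distr_distr[symmetric, OF Gs_meas Gs_pow_meas])
  also have "\<dots> = haarH" by (simp add: Suc Gs_distr)
  finally show ?case .
qed

lemma Psi_distr:
  assumes "lead_coeff B = 1"
  shows "distr (haarH :: (nat \<Rightarrow> 'a::{field,finite}) measure) haarH (Psi B h) = haarH"
proof -
  have "distr (haarH :: (nat \<Rightarrow> 'a) measure) haarH (Psi B h) = distr haarH haarH ((Gs ^^ h) \<circ> mulB B)"
  proof -
    have "Psi B h = (Gs ^^ h) \<circ> mulB B" by (rule ext) (simp add: Psi_def)
    then show ?thesis by simp
  qed
  also have "\<dots> = distr (distr haarH haarH (mulB B)) haarH (Gs ^^ h)"
    by (rule distr_distr[symmetric, OF Gs_pow_meas mulB_meas])
  also have "\<dots> = haarH" by (simp add: mulB_distr[OF assms] Gs_pow_distr)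
  finally show ?thesis .
qed

lemma Psi_pre:
  assumes "lead_coeff B = 1" and A: "A \<in> sets (haarH :: (nat \<Rightarrow> 'a::{field,finite}) measure)"
  shows "emeasure haarH (Psi B h -` A) = emeasure (haarH :: (nat \<Rightarrow> 'a) measure) A"
proof -
  have "emeasure (haarH :: (nat \<Rightarrow> 'a) measure) A = emeasure (distr haarH haarH (Psi B h)) A"
    by (simp add: Psi_distr[OF assms(1)])
  also have "\<dots> = emeasure haarH (Psi B h -` A)"
    by (subst emeasure_distr[OF Psi_meas A]) simp
  finally show ?thesis by simp
qed

definition Aev :: "'a::{field,finite} poly \<Rightarrow> nat \<Rightarrow> real \<Rightarrow> (nat \<Rightarrow> 'a) set" where
  "Aev B h X = {a. X \<le> real CARD('a) ^ Dg (Psi B h a)}"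

lemma Aev_sets: "Aev B h X \<in> sets (haarH :: (nat \<Rightarrow> 'a::{field,finite}) measure)"
proof -
  have "(\<lambda>a. Dg (Psi B h a)) \<in> measurable (haarH :: (nat \<Rightarrow> 'a) measure) (count_space UNIV)"
    by (rule measurable_compose[OF Psi_meas Dg_meas])
  then have "(\<lambda>a. Dg (Psi B h a)) -` {d. X \<le> real CARD('a) ^ d} \<inter> space haarH \<in> sets (haarH :: (nat \<Rightarrow> 'a) measure)"
    by (rule measurable_sets) simp
  then show ?thesis by (simp add: Aev_def vimage_def)
qed

lemma Aev_bound:
  assumes B: "lead_coeff B = 1" and X: "X > 0"
  shows "emeasure (haarH :: (nat \<Rightarrow> 'a::{field,finite}) measure) (Aev B h X) \<le> ennreal (real CARD('a) / X)"
proof -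
  let ?p = "real CARD('a)"
  have p2: "?p \<ge> 2" using card_ge2[where 'a='a] by simp
  have ex: "\<exists>k. X \<le> ?p ^ k"
    using real_arch_pow[of ?p X] p2 by (auto intro: less_imp_le)
  define k where "k = (LEAST k. X \<le> ?p ^ k)"
  have k: "X \<le> ?p ^ k" unfolding k_def by (rule LeastI_ex[OF ex])
  have kmin: "d < k \<Longrightarrow> \<not> X \<le> ?p ^ d" for d unfolding k_def by (rule not_less_Least)
  define Z where "Z = cylL (replicate (k - 1) (0::'a))"
  have sub: "Aev B h X \<subseteq> Psi B h -` Z"
  proof
    fix a assume "a \<in> Aev B h X"
    then have le: "X \<le> ?p ^ Dg (Psi B h a)" by (simp add: Aev_def)
    then have kd: "k \<le> Dg (Psi B h a)" using kmin not_less by blast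
    let ?y = "Psi B h a"
    show "a \<in> Psi B h -` Z"
    proof (cases "k = 0")
      case True then show ?thesis by (simp add: Z_def cylL_def)
    next
      case False
      then have nz: "?y \<noteq> (\<lambda>_. 0)" and "k \<le> fnz ?y + 1" using kd by (auto simp: Dg_eq split: if_splits)
      then have "\<forall>i<k-1. ?y i = 0" using fnz(2)[OF nz] by auto
      then show ?thesis by (simp add: Z_def cylL_def)
    qed
  qed
  have "emeasure (haarH :: (nat \<Rightarrow> 'a) measure) (Aev B h X) \<le> emeasure haarH (Psi B h -` Z)"
    by (rule emeasure_mono[OF sub]) (use measurable_sets[OF Psi_meas cylL_sets] in \<open>simp add: Z_def\<close>)
  also have "\<dots> = emeasure haarH Z" unfolding Z_def by (rule Psi_pre[OF B cylL_sets])
  also have "\<dots> = ennreal ((1 / ?p) ^ (k - 1))" unfolding Z_def by (simp add: emeasure_cylL)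
  also have "\<dots> \<le> ennreal (?p / X)"
  proof (rule ennreal_leI)
    show "(1 / ?p) ^ (k - 1) \<le> ?p / X"
    proof (cases "k = 0")
      case True
      then have "X \<le> 1" using k by simp
      then show ?thesis using True X p2 by (simp add: field_simps)
    next
      case False
      then have "?p ^ k = ?p * ?p ^ (k - 1)" by (metis Suc_pred' not_gr0 power_Suc)
      then have "(1 / ?p) ^ (k - 1) = ?p / ?p ^ k" using p2 by (simp add: field_simps power_one_over)
      also have "\<dots> \<le> ?p / X" using k X p2 by (intro divide_left_mono) auto
      finally show ?thesis .
    qed
  qed
  finally show ?thesis .
qed


lemma seq_inj: "seq_to_fls a = seq_to_fls b \<Longrightarrow> a = b"
proof (rule ext)
  fix i assume "seq_to_fls a = seq_to_fls b"
  then have "seq_to_fls a $$ (int i + 1) = seq_to_fls b $$ (int i + 1)" by simp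
  then show "a i = b i" by (simp add: seq_to_fls_nth)
qed

lemma poly_to_fls_nz: "Q \<noteq> 0 \<Longrightarrow> poly_to_fls Q \<noteq> (0::'a::field fls)"
proof
  assume Q: "Q \<noteq> 0" and "poly_to_fls Q = 0"
  then have "poly_to_fls Q $$ (- int (degree Q)) = 0" by simp
  then show False using Q by (simp add: poly_to_fls_nth)
qed

lemma countable_poly: "countable (UNIV :: 'a::{zero,finite} poly set)"
proof (rule countable_image_inj_on)
  show "countable (coeffs ` (UNIV :: 'a poly set))" by (rule countable_subset[OF subset_UNIV countable_lists_fin])
  show "inj_on coeffs (UNIV :: 'a poly set)" by (rule inj_onI) (simp add: coeffs_eq_iff)
qed

lemma rat_countable: "countable {a :: nat \<Rightarrow> 'a::{field,finite}. is_rational_fls (seq_to_fls a)}"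
proof -
  define S where "S PQ = {a :: nat \<Rightarrow> 'a. snd PQ \<noteq> 0 \<and> poly_to_fls (snd PQ) * seq_to_fls a = poly_to_fls (fst PQ)}" for PQ
  have sub: "{a :: nat \<Rightarrow> 'a. is_rational_fls (seq_to_fls a)} \<subseteq> (\<Union>PQ\<in>UNIV \<times> UNIV. S PQ)"
  proof
    fix a assume "a \<in> {a :: nat \<Rightarrow> 'a. is_rational_fls (seq_to_fls a)}"
    then obtain P Q where "Q \<noteq> 0" "poly_to_fls Q * seq_to_fls a = poly_to_fls P"
      unfolding is_rational_fls_def by blast
    then have "a \<in> S (P, Q)" by (simp add: S_def)
    then show "a \<in> (\<Union>PQ\<in>UNIV \<times> UNIV. S PQ)" by blast
  qed
  have "countable (S PQ)" for PQ
  proof (cases "S PQ = {}")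
    case False
    then obtain a where a: "a \<in> S PQ" by auto
    have "S PQ \<subseteq> {a}"
    proof
      fix b assume b: "b \<in> S PQ"
      have nz: "poly_to_fls (snd PQ) \<noteq> (0::'a fls)" using a by (intro poly_to_fls_nz) (simp add: S_def)
      have "poly_to_fls (snd PQ) * seq_to_fls b = poly_to_fls (snd PQ) * seq_to_fls a"
        using a b by (simp add: S_def)
      then have "seq_to_fls b = seq_to_fls a" using nz by (rule mult_left_cancel[THEN iffD1, rotated])
      then show "b \<in> {a}" using seq_inj by auto
    qed
    then show ?thesis by (rule countable_subset) simp
  qed simp
  moreover have "countable ((UNIV :: 'a poly set) \<times> (UNIV :: 'a poly set))"
    by (intro countable_SIGMA countable_poly)
  ultimately have "countable (\<Union>PQ\<in>UNIV \<times> UNIV. S PQ)" by (intro countable_UN) blast+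
  then show ?thesis by (rule countable_subset[OF sub])
qed

lemma UB:
  fixes X :: "'i \<Rightarrow> 'b set" and f :: "'i \<Rightarrow> real"
  assumes I: "countable I" and Xs: "\<And>i. i \<in> I \<Longrightarrow> X i \<in> sets M"
    and le: "\<And>i. i \<in> I \<Longrightarrow> emeasure M (X i) \<le> ennreal (f i)"
    and nn: "\<And>i. i \<in> I \<Longrightarrow> f i \<ge> 0"
    and S: "\<And>F. finite F \<Longrightarrow> F \<subseteq> I \<Longrightarrow> sum f F \<le> S"
  shows "emeasure M (\<Union>i\<in>I. X i) \<le> ennreal S"
proof (cases "I = {}")
  case True then show ?thesis by simp
next
  case False
  define e where "e = from_nat_into I"
  have re: "range e = I" using False I by (simp add: e_def)
  define Y where "Y n = (\<Union>i\<in>e ` {..n}. X i)" for n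
  have Ysets: "range Y \<subseteq> sets M" using re Xs unfolding Y_def by auto
  have inc: "incseq Y" unfolding incseq_def Y_def
  proof (intro allI impI)
    fix m n :: nat assume "m \<le> n"
    then show "(\<Union>i\<in>e ` {..m}. X i) \<subseteq> (\<Union>i\<in>e ` {..n}. X i)" by (intro UN_mono image_mono) auto
  qed
  have UY: "(\<Union>i\<in>I. X i) = (\<Union>n. Y n)" unfolding Y_def re[symmetric] by auto
  have "emeasure M (Y n) \<le> ennreal S" for n
  proof -
    have F: "finite (e ` {..n})" "e ` {..n} \<subseteq> I" using re by auto
    have "emeasure M (Y n) \<le> (\<Sum>i\<in>e ` {..n}. emeasure M (X i))"
      unfolding Y_def by (rule emeasure_subadditive_finite) (use F Xs in auto)
    also have "\<dots> \<le> (\<Sum>i\<in>e ` {..n}. ennreal (f i))" by (intro sum_mono le) (use F in auto)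
    also have "\<dots> = ennreal (sum f (e ` {..n}))" using F nn by (intro sum_ennreal) auto
    also have "\<dots> \<le> ennreal S" by (intro ennreal_leI S F)
    finally show ?thesis .
  qed
  then have "(SUP n. emeasure M (Y n)) \<le> ennreal S" by (intro SUP_least)
  then show ?thesis unfolding UY SUP_emeasure_incseq[OF Ysets inc] .
qed

definition wt :: "nat \<Rightarrow> real" where "wt n = 1 / real (max 1 n) ^ 4"
definition gt :: "nat \<Rightarrow> real" where "gt n = 1 / real (Suc n) ^ 4"

lemma gt_summable: "summable gt"
proof (rule summable_comparison_test')
  show "summable (\<lambda>n. 1 / real ((n + 1)^2))" using inverse_squares_sums by (rule sums_summable)
  fix n show "norm (gt n) \<le> 1 / real ((n + 1)^2)"
    unfolding gt_def by (simp add: field_simps power_increasing)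
qed

lemma wt_summable: "summable wt"
proof -
  have "summable (\<lambda>n. wt (Suc n))" using gt_summable
    by (simp add: wt_def gt_def[abs_def] max_def)
  then show ?thesis by (simp add: summable_Suc_iff)
qed

lemma wt_nn: "wt n \<ge> 0" and gt_nn: "gt n \<ge> 0" by (simp_all add: wt_def gt_def)


definition Ltt :: "nat \<Rightarrow> (nat \<Rightarrow> nat) set" where "Ltt t = PiE {..<t} (\<lambda>_. UNIV)"
definition Bl :: "nat \<Rightarrow> (nat \<Rightarrow> 'a::{field,finite} poly) \<Rightarrow> (nat \<Rightarrow> nat) \<Rightarrow> 'a poly" where
  "Bl t b l = (\<Prod>i<t. b i ^ l i)"
definition mm :: "nat \<Rightarrow> (nat \<Rightarrow> nat) \<Rightarrow> real" where "mm t l = real (\<Prod>i<t. max 1 (l i))"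
definition Xv :: "nat \<Rightarrow> real \<Rightarrow> (nat \<Rightarrow> nat) \<Rightarrow> nat \<Rightarrow> real" where
  "Xv t C l h = C * (mm t l * real (Suc h)) ^ 4"
definition Bad :: "nat \<Rightarrow> (nat \<Rightarrow> 'a::{field,finite} poly) \<Rightarrow> real \<Rightarrow> (nat \<Rightarrow> 'a) set" where
  "Bad t b C = {a. is_rational_fls (seq_to_fls a)} \<union> (\<Union>lh\<in>Ltt t \<times> UNIV. Aev (Bl t b (fst lh)) (snd lh) (Xv t C (fst lh) (snd lh)))"

lemma deg_Psi: "degree (cf_quot (poly_to_fls B * seq_to_fls a) (Suc h)) = Dg (Psi B h a)"
  by (simp add: cf_quot_Suc mulB_def[symmetric] Psi_def)

lemma restrict_Bl: "Bl t b (restrict l {..<t}) = Bl t b l"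
  unfolding Bl_def by (intro prod.cong refl) auto

lemma restrict_mm: "mm t (restrict l {..<t}) = mm t l"
  unfolding mm_def by (intro arg_cong[where f = real] prod.cong refl) auto

lemma E_eq: "E_set t b C = UNIV - Bad t b C"
proof (intro set_eqI iffI)
  fix a assume a: "a \<in> E_set t b C"
  have nr: "\<not> is_rational_fls (seq_to_fls a)"
    and all: "\<forall>l::nat \<Rightarrow> nat. \<forall>h::nat. h \<ge> 1 \<longrightarrow> real CARD('a) ^ degree (cf_quot (poly_to_fls (\<Prod>i<t. b i ^ l i) * seq_to_fls a) h)
          < C * (real (\<Prod>i<t. max 1 (l i)) * real h) ^ 4"
    using a unfolding E_set_def mem_Collect_eq by blast+
  have notin: "a \<notin> Aev (Bl t b l) h (Xv t C l h)" for l h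
  proof -
    have "real CARD('a) ^ degree (cf_quot (poly_to_fls (\<Prod>i<t. b i ^ l i) * seq_to_fls a) (Suc h))
        < C * (real (\<Prod>i<t. max 1 (l i)) * real (Suc h)) ^ 4"
      using all[rule_format, of "Suc h" l] by simp
    then show ?thesis unfolding Aev_def Xv_def mm_def Bl_def deg_Psi by simp
  qed
  have "a \<notin> (\<Union>lh\<in>Ltt t \<times> UNIV. Aev (Bl t b (fst lh)) (snd lh) (Xv t C (fst lh) (snd lh)))"
  proof
    assume "a \<in> (\<Union>lh\<in>Ltt t \<times> UNIV. Aev (Bl t b (fst lh)) (snd lh) (Xv t C (fst lh) (snd lh)))"
    then obtain lh where "a \<in> Aev (Bl t b (fst lh)) (snd lh) (Xv t C (fst lh) (snd lh))" by (rule UN_E)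
    then show False using notin by simp
  qed
  then show "a \<in> UNIV - Bad t b C" using nr unfolding Bad_def by simp
next
  fix a assume a: "a \<in> UNIV - Bad t b C"
  have nr: "\<not> is_rational_fls (seq_to_fls a)" using a by (simp add: Bad_def)
  have "real CARD('a) ^ degree (cf_quot (poly_to_fls (\<Prod>i<t. b i ^ l i) * seq_to_fls a) h)
          < C * (real (\<Prod>i<t. max 1 (l i)) * real h) ^ 4" if h: "h \<ge> 1" for l h
  proof -
    obtain h' where h': "h = Suc h'" using h by (cases h) auto
    define l' where "l' = restrict l {..<t}"
    have l': "(l', h') \<in> Ltt t \<times> UNIV" by (simp add: l'_def Ltt_def)
    have "a \<notin> Aev (Bl t b l') h' (Xv t C l' h')"
    proof
      assume "a \<in> Aev (Bl t b l') h' (Xv t C l' h')"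
      then have "a \<in> (\<Union>lh\<in>Ltt t \<times> UNIV. Aev (Bl t b (fst lh)) (snd lh) (Xv t C (fst lh) (snd lh)))"
        using l' by (intro UN_I[of "(l', h')"]) simp_all
      then show False using a unfolding Bad_def by simp
    qed
    then have "\<not> Xv t C l h' \<le> real CARD('a) ^ Dg (Psi (Bl t b l) h' a)"
      unfolding Aev_def l'_def restrict_Bl restrict_mm Xv_def by simp
    then show ?thesis unfolding h' Xv_def mm_def Bl_def deg_Psi by simp
  qed
  then show "a \<in> E_set t b C" using nr unfolding E_set_def by blast
qed

lemma countable_Ltt: "countable (Ltt t)"
  unfolding Ltt_def by (rule countable_PiE) auto

lemma Bad_sets: "Bad t b C \<in> sets (haarH :: (nat \<Rightarrow> 'a::{field,finite}) measure)"
  unfolding Bad_def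
proof (rule sets.Un)
  show "{a :: nat \<Rightarrow> 'a. is_rational_fls (seq_to_fls a)} \<in> sets haarH"
    by (rule countable_sets[OF rat_countable])
  show "(\<Union>lh\<in>Ltt t \<times> UNIV. Aev (Bl t b (fst lh)) (snd lh) (Xv t C (fst lh) (snd lh))) \<in> sets (haarH :: (nat \<Rightarrow> 'a) measure)"
    by (rule sets.countable_UN'') (auto intro: Aev_sets countable_SIGMA countable_Ltt)
qed

lemma Bl_monic: "(\<forall>i<t. lead_coeff (b i) = 1) \<Longrightarrow> lead_coeff (Bl t b l) = 1"
  unfolding Bl_def by (simp add: lead_coeff_prod lead_coeff_power)

lemma mm_ge1: "mm t l \<ge> 1"
  unfolding mm_def
proof -
  have "(\<Prod>i<t. max 1 (l i)) \<ge> (1::nat)" by (intro prod_ge_1) auto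
  then have "real (1::nat) \<le> real (\<Prod>i<t. max 1 (l i))" by (rule of_nat_mono)
  then show "real (\<Prod>i<t. max 1 (l i)) \<ge> 1" by (simp only: of_nat_1)
qed

lemma prod_wt: "(\<Prod>i<t. wt (l i)) = 1 / mm t l ^ 4"
  unfolding wt_def mm_def by (simp add: prod_dividef prod_power_distrib)


lemma finsum_bound:
  assumes fin: "finite F" and sub: "F \<subseteq> Ltt t \<times> (UNIV :: nat set)" and K: "K \<ge> 0"
  shows "(\<Sum>lh\<in>F. K * (\<Prod>i<t. wt (fst lh i)) * gt (snd lh)) \<le> K * suminf wt ^ t * suminf gt"
proof -
  define f where "f lh = K * (\<Prod>i<t. wt (fst lh i)) * gt (snd lh)" for lh :: "(nat \<Rightarrow> nat) \<times> nat"
  have fnn: "f lh \<ge> 0" for lh unfolding f_def using K by (intro mult_nonneg_nonneg prod_nonneg wt_nn gt_nn) auto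
  define N where "N = Max (insert 0 ((\<lambda>lh. snd lh + (\<Sum>i<t. fst lh i)) ` F))"
  have bnd: "snd lh + (\<Sum>i<t. fst lh i) \<le> N" if "lh \<in> F" for lh
    unfolding N_def using fin that by (intro Max_ge) auto
  define Box where "Box = PiE {..<t} (\<lambda>_. {..N}) \<times> {..N}"
  have finBox: "finite Box" unfolding Box_def by (intro finite_cartesian_product finite_PiE) auto
  have FB: "F \<subseteq> Box"
  proof
    fix lh assume lh: "lh \<in> F"
    obtain l h where lh_eq: "lh = (l, h)" by (cases lh)
    have l: "l \<in> Ltt t" using sub lh lh_eq by auto
    have b: "h + (\<Sum>i<t. l i) \<le> N" using bnd[OF lh] lh_eq by simp
    have "l i \<le> N" if "i < t" for i
    proof -
      have "l i \<le> (\<Sum>i<t. l i)" using that by (intro member_le_sum) auto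
      then show ?thesis using b by simp
    qed
    then have "l \<in> PiE {..<t} (\<lambda>_. {..N})" using l unfolding Ltt_def by (auto simp: PiE_iff)
    moreover have "h \<le> N" using b by simp
    ultimately show "lh \<in> Box" unfolding Box_def lh_eq by simp
  qed
  have "sum f F \<le> sum f Box" by (rule sum_mono2[OF finBox FB]) (simp add: fnn)
  also have "sum f Box = K * (\<Sum>l\<in>PiE {..<t} (\<lambda>_. {..N}). \<Prod>i<t. wt (l i)) * (\<Sum>h\<le>N. gt h)"
  proof -
    have "sum f Box = (\<Sum>l\<in>PiE {..<t} (\<lambda>_. {..N}). \<Sum>h\<le>N. f (l, h))"
      unfolding Box_def by (simp add: sum.cartesian_product)
    also have "\<dots> = (\<Sum>l\<in>PiE {..<t} (\<lambda>_. {..N}). K * (\<Prod>i<t. wt (l i)) * (\<Sum>h\<le>N. gt h))"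
      by (simp add: f_def sum_distrib_left)
    also have "\<dots> = K * (\<Sum>l\<in>PiE {..<t} (\<lambda>_. {..N}). \<Prod>i<t. wt (l i)) * (\<Sum>h\<le>N. gt h)"
      by (simp only: sum_distrib_right[symmetric] sum_distrib_left[symmetric])
    finally show ?thesis .
  qed
  also have "(\<Sum>l\<in>PiE {..<t} (\<lambda>_. {..N}). \<Prod>i<t. wt (l i)) = (\<Prod>i<t. \<Sum>n\<le>N. wt n)"
    by (rule prod_sum_PiE[symmetric]) auto
  also have "K * (\<Prod>i<t. \<Sum>n\<le>N. wt n) * (\<Sum>h\<le>N. gt h) \<le> K * suminf wt ^ t * suminf gt"
  proof -
    have w: "(\<Sum>n\<le>N. wt n) \<le> suminf wt" by (rule sum_le_suminf[OF wt_summable]) (auto simp: wt_nn)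
    have g: "(\<Sum>n\<le>N. gt n) \<le> suminf gt" by (rule sum_le_suminf[OF gt_summable]) (auto simp: gt_nn)
    have w0: "0 \<le> (\<Sum>n\<le>N. wt n)" by (intro sum_nonneg wt_nn)
    have g0: "0 \<le> (\<Sum>n\<le>N. gt n)" by (intro sum_nonneg gt_nn)
    have "(\<Prod>i<t. \<Sum>n\<le>N. wt n) \<le> (\<Prod>i<t. suminf wt)" by (intro prod_mono) (use w w0 in auto)
    then have p: "(\<Prod>i<t. \<Sum>n\<le>N. wt n) \<le> suminf wt ^ t" by simp
    have p0: "0 \<le> (\<Prod>i<t. \<Sum>n\<le>N. wt n)" by (intro prod_nonneg) (use w0 in auto)
    show ?thesis using K p p0 g g0 by (intro mult_mono) (auto intro: mult_nonneg_nonneg order_trans[OF w0 w])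
  qed
  finally show ?thesis unfolding f_def .
qed


lemma div_helper: "c > 0 \<Longrightarrow> m > 0 \<Longrightarrow> s > 0 \<Longrightarrow> (p::real) / (c * (m * s) ^ 4) = p / c * (1 / m ^ 4) * (1 / s ^ 4)"
  by (simp add: field_simps)

lemma Bad_bound:
  assumes monic: "\<forall>i<t. lead_coeff (b i) = 1" and C: "C > 0"
  shows "emeasure (haarH :: (nat \<Rightarrow> 'a::{field,finite}) measure) (Bad t b C)
     \<le> ennreal (real CARD('a) / C * suminf wt ^ t * suminf gt)"
proof -
  let ?p = "real CARD('a)"
  define R where "R = {a :: nat \<Rightarrow> 'a. is_rational_fls (seq_to_fls a)}"
  define U where "U = (\<Union>lh\<in>Ltt t \<times> UNIV. Aev (Bl t b (fst lh)) (snd lh) (Xv t C (fst lh) (snd lh)) :: (nat \<Rightarrow> 'a) set)"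
  have K: "?p / C \<ge> 0" using C by simp
  have Rn: "R \<in> null_sets haarH" unfolding R_def by (rule countable_null[OF rat_countable])
  have Us: "U \<in> sets haarH" unfolding U_def
    by (rule sets.countable_UN'') (auto intro: Aev_sets countable_SIGMA countable_Ltt)
  have Ub: "emeasure haarH U \<le> ennreal (?p / C * suminf wt ^ t * suminf gt)"
    unfolding U_def
  proof (rule UB[where f = "\<lambda>lh. ?p / C * (\<Prod>i<t. wt (fst lh i)) * gt (snd lh)"])
    show "countable (Ltt t \<times> (UNIV :: nat set))" by (intro countable_SIGMA countable_Ltt) auto
    fix lh :: "(nat \<Rightarrow> nat) \<times> nat"
    show "Aev (Bl t b (fst lh)) (snd lh) (Xv t C (fst lh) (snd lh)) \<in> sets (haarH :: (nat \<Rightarrow> 'a) measure)"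
      by (rule Aev_sets)
    show "0 \<le> ?p / C * (\<Prod>i<t. wt (fst lh i)) * gt (snd lh)"
      using K by (intro mult_nonneg_nonneg prod_nonneg wt_nn gt_nn) auto
    have X: "Xv t C (fst lh) (snd lh) > 0" using C mm_ge1[of t "fst lh"] by (simp add: Xv_def)
    have "emeasure (haarH :: (nat \<Rightarrow> 'a) measure) (Aev (Bl t b (fst lh)) (snd lh) (Xv t C (fst lh) (snd lh)))
        \<le> ennreal (?p / Xv t C (fst lh) (snd lh))"
      by (rule Aev_bound[OF Bl_monic[OF monic] X])
    also have "?p / Xv t C (fst lh) (snd lh) = ?p / C * (\<Prod>i<t. wt (fst lh i)) * gt (snd lh)"
      unfolding Xv_def prod_wt gt_def
      by (rule div_helper) (use C mm_ge1[of t "fst lh"] in auto)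
    finally show "emeasure (haarH :: (nat \<Rightarrow> 'a) measure) (Aev (Bl t b (fst lh)) (snd lh) (Xv t C (fst lh) (snd lh)))
        \<le> ennreal (?p / C * (\<Prod>i<t. wt (fst lh i)) * gt (snd lh))" .
  next
    fix F assume "finite F" "F \<subseteq> Ltt t \<times> (UNIV :: nat set)"
    then show "(\<Sum>lh\<in>F. ?p / C * (\<Prod>i<t. wt (fst lh i)) * gt (snd lh)) \<le> ?p / C * suminf wt ^ t * suminf gt"
      by (rule finsum_bound[OF _ _ K])
  qed
  have "emeasure haarH (Bad t b C) = emeasure haarH (U \<union> R)"
    unfolding Bad_def R_def U_def by (simp add: Un_commute)
  also have "\<dots> = emeasure haarH U" by (rule emeasure_Un_null_set[OF Us Rn])
  finally show ?thesis using Ub by simp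
qed


theorem mainTheorem11:
  fixes t :: nat
  assumes "prime (CARD('a::{field,finite}))" and "t \<ge> 1"
  shows "\<exists>c::real. \<forall>b :: nat \<Rightarrow> 'a poly.
    (\<forall>i<t. lead_coeff (b i) = 1 \<and> degree (b i) \<ge> 1) \<and>
    (\<forall>i<t. \<forall>j<t. i \<noteq> j \<longrightarrow> coprime (b i) (b j)) \<longrightarrow>
      (\<exists>C0. \<forall>C\<ge>C0. E_set t b C \<in> sets haarH \<and>
          measure haarH (space haarH - E_set t b C) \<le> c * ln C / C) \<and>
      ((\<lambda>C. measure haarH (E_set t b C)) \<longlongrightarrow> 1) at_top"
proof -
  interpret prob_space "haarH :: (nat \<Rightarrow> 'a) measure" by (rule prob_haar)
  define K where "K = real CARD('a) * suminf wt ^ t * suminf gt"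
  have K0: "K \<ge> 0" unfolding K_def
    using suminf_nonneg[OF wt_summable wt_nn] suminf_nonneg[OF gt_summable gt_nn] by simp
  show ?thesis
  proof (rule exI[of _ K], intro allI impI)
    fix b :: "nat \<Rightarrow> 'a poly"
    assume hyp: "(\<forall>i<t. lead_coeff (b i) = 1 \<and> degree (b i) \<ge> 1) \<and>
      (\<forall>i<t. \<forall>j<t. i \<noteq> j \<longrightarrow> coprime (b i) (b j))"
    then have monic: "\<forall>i<t. lead_coeff (b i) = 1" by blast
    have meas: "E_set t b C \<in> sets haarH" for C
    proof -
      have "E_set t b C = space haarH - Bad t b C" by (simp add: E_eq)
      also have "\<dots> \<in> sets haarH" by (rule sets.compl_sets[OF Bad_sets])
      finally show ?thesis .
    qed
    have compl: "space haarH - E_set t b C = Bad t b C" for C by (auto simp: E_eq)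
    have bnd: "measure haarH (space haarH - E_set t b C) \<le> K / C" if C: "C > 0" for C
    proof -
      have "ennreal (measure haarH (Bad t b C)) = emeasure haarH (Bad t b C)"
        by (simp add: emeasure_eq_measure)
      also have "\<dots> \<le> ennreal (real CARD('a) / C * suminf wt ^ t * suminf gt)"
        by (rule Bad_bound[OF monic C])
      also have "real CARD('a) / C * suminf wt ^ t * suminf gt = K / C" by (simp add: K_def)
      finally have "ennreal (measure haarH (Bad t b C)) \<le> ennreal (K / C)" .
      then have "measure haarH (Bad t b C) \<le> K / C" using K0 C by (simp add: ennreal_le_iff)
      then show ?thesis unfolding compl .
    qed
    have P1: "(\<exists>C0. \<forall>C\<ge>C0. E_set t b C \<in> sets haarH \<and>
          measure haarH (space haarH - E_set t b C) \<le> K * ln C / C)"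
    proof (intro exI allI impI conjI)
      fix C :: real assume C: "C \<ge> exp 1"
      then have Cp: "C > 0" using exp_gt_zero[of 1] by linarith
      have "ln C \<ge> 1" using C Cp by (metis ln_exp ln_le_cancel_iff exp_gt_zero)
      then have "K / C \<le> K * ln C / C" using K0 Cp by (intro divide_right_mono) (use mult_left_mono[of 1 "ln C" K] in auto)
      then show "measure haarH (space haarH - E_set t b C) \<le> K * ln C / C" using bnd[OF Cp] by linarith
      show "E_set t b C \<in> sets haarH" by (rule meas)
    qed
    have P2: "((\<lambda>C. measure haarH (E_set t b C)) \<longlongrightarrow> 1) at_top"
    proof (rule tendsto_sandwich)
      show "\<forall>\<^sub>F C in at_top. 1 - K / C \<le> measure haarH (E_set t b C)"
      proof (rule eventually_mono[OF eventually_gt_at_top[of 0]])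
        fix C :: real assume C: "C > 0"
        have "measure haarH (E_set t b C) = 1 - measure haarH (space haarH - E_set t b C)"
          using prob_compl[OF meas[of C]] by simp
        then show "1 - K / C \<le> measure haarH (E_set t b C)" using bnd[OF C] by simp
      qed
      show "\<forall>\<^sub>F C in at_top. measure haarH (E_set t b C) \<le> 1" by (simp add: measure_le_1)
      show "((\<lambda>C. 1 - K / C) \<longlongrightarrow> 1) at_top"
      proof -
        have "((\<lambda>C::real. K / C) \<longlongrightarrow> 0) at_top"
          by (rule real_tendsto_divide_at_top[OF tendsto_const filterlim_ident])
        then show ?thesis using tendsto_diff[OF tendsto_const[of 1]] by fastforce
      qed
    qed simp
    show "(\<exists>C0. \<forall>C\<ge>C0. E_set t b C \<in> sets haarH \<and>
          measure haarH (space haarH - E_set t b C) \<le> K * ln C / C) \<and>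
      ((\<lambda>C. measure haarH (E_set t b C)) \<longlongrightarrow> 1) at_top" using P1 P2 by (rule conjI)
  qed
qed


end
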